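(* Fix $M>1$, $M_1>0$ and let $\mathfrak C=\mathfrak C(M,M_1)$. Let $K:\mathbb R\to[0,\infty)$ be a bounded kernel with support contained in $[-1,1]$, $\int K(x)\,dx=1$, $\int xK(x)\,dx=0$ and $\int x^2K(x)\,dx>0$. Given i.i.d. observations $(U_1,V_1),\dots,(U_n,V_n)$ from a copula $C\in\mathfrak C$ and a bandwidth $h>0$, let $c_n(u,v)=\frac{1}{nh^2}\sum_{i=1}^nK\big(\frac{u-U_i}{h}\big)K\big(\frac{v-V_i}{h}\big)$ and define the plug-in estimator $\widehat{Ccor}=\int_0^1\int_0^1[1-c_n(u,v)]_+\,du\,dv$. Then there exist finite constants $A,B,M_5>0$ and $h_0>0$, depending only on $M$, $M_1$ and $K$, such that for all $n\ge1$ and all $h\in(0,h_0]$, $$\sup_{C\in\mathfrak C}E\big[|\widehat{Ccor}-Ccor(C)|\big]\le A\,h+\frac{B}{\sqrt{nh^2}}+\frac{M_5}{nh^2}.$$ Consequently, if $h=h_n\to0$ and $nh_n^2\to\infty$, $\widehat{Ccor}$ is uniformly consistent over $\mathfrak C$, and with $h=n^{-1/4}$ the uniform risk is $O(n^{-1/4})$.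
   Context: A copula is a probability distribution on $[0,1]^2$ with uniform marginals. For $M>1$ and $M_1>0$, $\mathfrak C(M,M_1)$ is the class of absolutely continuous copulas $C$ whose density $c$ is continuous on $(0,1)^2$ and satisfies: with $A_M=\{(u,v): c(u,v)<M\}$, $|c(u_1,v_1)-c(u_2,v_2)|\le M_1\|(u_1-u_2,v_1-v_2)\|$ whenever both points lie in $A_M$. The copula correlation is $Ccor(C)=\tfrac12\iint_{[0,1]^2}|c(u,v)-1|\,du\,dv$ (equivalently $\iint_{[0,1]^2}[1-c(u,v)]_+\,du\,dv$). Here $x_+=\max(x,0)$. *)

theory Defs
  imports "HOL-Probability.Probability"
begin

definition unit_sq :: "(real \<times> real) set" where
  "unit_sq = {0..1} \<times> {0..1}"

definition open_unit_sq :: "(real \<times> real) set" where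
  "open_unit_sq = {0<..<1} \<times> {0<..<1}"

definition is_copula_density :: "(real \<times> real \<Rightarrow> real) \<Rightarrow> bool" where
  "is_copula_density c \<longleftrightarrow>
     (\<forall>p\<in>open_unit_sq. 0 \<le> c p) \<and>
     set_integrable lborel unit_sq c \<and>
     (\<forall>t\<in>{0..1}. (LINT p:({0..t} \<times> {0..1})|lborel. c p) = t \<and>
                  (LINT p:({0..1} \<times> {0..t})|lborel. c p) = t)"

definition copula_class :: "real \<Rightarrow> real \<Rightarrow> (real \<times> real \<Rightarrow> real) set" where
  "copula_class M M1 = {c. is_copula_density c \<and> continuous_on open_unit_sq c \<and>
     (\<forall>p\<in>open_unit_sq. \<forall>q\<in>open_unit_sq. c p < M \<longrightarrow> c q < M \<longrightarrow>
         \<bar>c p - c q\<bar> \<le> M1 * dist p q)}"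

definition Ccor :: "(real \<times> real \<Rightarrow> real) \<Rightarrow> real" where
  "Ccor c = (1/2) * (LINT p:unit_sq|lborel. \<bar>c p - 1\<bar>)"

definition copula_measure :: "(real \<times> real \<Rightarrow> real) \<Rightarrow> (real \<times> real) measure" where
  "copula_measure c = density lborel (\<lambda>p. ennreal (c p) * indicator unit_sq p)"

definition sample_law :: "(real \<times> real \<Rightarrow> real) \<Rightarrow> nat \<Rightarrow> (nat \<Rightarrow> real \<times> real) measure" where
  "sample_law c n = PiM {..<n} (\<lambda>_. copula_measure c)"

definition kde :: "(real \<Rightarrow> real) \<Rightarrow> nat \<Rightarrow> real \<Rightarrow> (nat \<Rightarrow> real \<times> real) \<Rightarrow> real \<times> real \<Rightarrow> real" where
  "kde K n h \<omega> p = (1 / (real n * h\<^sup>2)) *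
     (\<Sum>i<n. K ((fst p - fst (\<omega> i)) / h) * K ((snd p - snd (\<omega> i)) / h))"

definition Ccor_hat :: "(real \<Rightarrow> real) \<Rightarrow> nat \<Rightarrow> real \<Rightarrow> (nat \<Rightarrow> real \<times> real) \<Rightarrow> real" where
  "Ccor_hat K n h \<omega> = (LINT p:unit_sq|lborel. max 0 (1 - kde K n h \<omega> p))"

definition risk :: "(real \<Rightarrow> real) \<Rightarrow> (real \<times> real \<Rightarrow> real) \<Rightarrow> nat \<Rightarrow> real \<Rightarrow> ennreal" where
  "risk K c n h = (\<integral>\<^sup>+ \<omega>. ennreal \<bar>Ccor_hat K n h \<omega> - Ccor c\<bar> \<partial>sample_law c n)"

definition admissible_kernel :: "(real \<Rightarrow> real) \<Rightarrow> bool" where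
  "admissible_kernel K \<longleftrightarrow>
     K \<in> borel_measurable borel \<and>
     (\<forall>x. 0 \<le> K x) \<and> bounded (range K) \<and>
     (\<forall>x. x \<notin> {-1..1} \<longrightarrow> K x = 0) \<and>
     (LINT x|lborel. K x) = 1 \<and>
     (LINT x|lborel. x * K x) = 0 \<and>
     (LINT x|lborel. x\<^sup>2 * K x) > 0"

end

theory Submission
  imports Defs
begin

definition W :: "(real \<Rightarrow> real) \<Rightarrow> real \<Rightarrow> real \<times> real \<Rightarrow> real \<times> real \<Rightarrow> real" where
  "W K h p q = K ((fst p - fst q)/h) * K ((snd p - snd q)/h) / h\<^sup>2"

lemma adm_meas: "admissible_kernel K \<Longrightarrow> K \<in> borel_measurable borel"
  by (simp add: admissible_kernel_def)

lemma adm_bound: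
  assumes "admissible_kernel K"
  obtains Kb where "Kb > 0" "\<And>x. 0 \<le> K x" "\<And>x. K x \<le> Kb"
proof -
  from assms have b: "bounded (range K)" and nn: "\<And>x. 0 \<le> K x" using assms unfolding admissible_kernel_def by blast+
  then obtain B where B: "\<forall>y\<in>range K. norm y \<le> B" unfolding bounded_iff by blast
  have "K x \<le> max 1 B" for x
  proof -
    have "norm (K x) \<le> B" using B by blast
    then show ?thesis by (simp add: abs_le_iff le_max_iff_disj)
  qed
  then show ?thesis using that[of "max 1 B"] nn by (simp add: \<open>\<And>x. K x \<le> max 1 B\<close>)
qed

lemma adm_nn_int:
  assumes "admissible_kernel K"
  shows "(\<integral>\<^sup>+x. ennreal (K x) \<partial>lborel) = 1"
proof -
  have "(LINT x|lborel. K x) = 1" using assms unfolding admissible_kernel_def by blast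
  then have i: "integrable lborel K" using not_integrable_integral_eq by force
  have "(\<integral>\<^sup>+x. ennreal (K x) \<partial>lborel) = ennreal (LINT x|lborel. K x)"
  proof (rule nn_integral_eq_integral[OF i])
    have "\<And>x. 0 \<le> K x" using assms unfolding admissible_kernel_def by blast
    then show "AE x in lborel. 0 \<le> K x" by simp
  qed
  moreover have "(LINT x|lborel. K x) = 1" using assms unfolding admissible_kernel_def by blast
  ultimately show ?thesis by simp
qed

lemma K_aff_gen:
  assumes "admissible_kernel K" "c \<noteq> 0"
  shows "1 = ennreal \<bar>c\<bar> * (\<integral>\<^sup>+x. ennreal (K (t + c * x)) \<partial>lborel)"
proof -
  have m[measurable]: "K \<in> borel_measurable borel" using assms(1) by (rule adm_meas)
  have "(\<integral>\<^sup>+x. ennreal (K x) \<partial>lborel) = \<bar>c\<bar> * (\<integral>\<^sup>+x. ennreal (K (t + c * x)) \<partial>lborel)"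
  proof (rule nn_integral_real_affine)
    show "(\<lambda>x. ennreal (K x)) \<in> borel_measurable borel" by measurable
    show "c \<noteq> 0" using assms(2) .
  qed
  then show ?thesis using adm_nn_int[OF assms(1)] by simp
qed

lemma ennreal_inv_eq:
  assumes "h > 0" "1 = ennreal (1/h) * X"
  shows "X = ennreal h"
proof -
  have "ennreal h * (ennreal (1/h) * X) = X"
    using assms(1) by (simp add: mult.assoc[symmetric] ennreal_mult[symmetric])
  then show ?thesis using assms(2) by (metis mult.right_neutral)
qed

lemma K_aff1:
  assumes "admissible_kernel K" "h > 0"
  shows "(\<integral>\<^sup>+x. ennreal (K ((a - x)/h)) \<partial>lborel) = ennreal h"
proof (rule ennreal_inv_eq[OF assms(2)])
  have e: "\<And>x. a/h + (-1/h) * x = (a - x)/h" using assms(2) by (simp add: field_simps)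
  have "\<bar>-1/h\<bar> = 1/h" using assms(2) by simp
  then show "1 = ennreal (1/h) * (\<integral>\<^sup>+x. ennreal (K ((a - x)/h)) \<partial>lborel)"
    using K_aff_gen[OF assms(1), of "-1/h" "a/h"] assms(2) unfolding e by simp
qed

lemma K_aff2:
  assumes "admissible_kernel K" "h > 0"
  shows "(\<integral>\<^sup>+x. ennreal (K ((x - a)/h)) \<partial>lborel) = ennreal h"
proof (rule ennreal_inv_eq[OF assms(2)])
  have e: "\<And>x. -a/h + (1/h) * x = (x - a)/h" using assms(2) by (simp add: field_simps)
  have "\<bar>1/h\<bar> = 1/h" using assms(2) by simp
  then show "1 = ennreal (1/h) * (\<integral>\<^sup>+x. ennreal (K ((x - a)/h)) \<partial>lborel)"
    using K_aff_gen[OF assms(1), of "1/h" "-a/h"] assms(2) unfolding e by simp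
qed

lemma W_nonneg: "admissible_kernel K \<Longrightarrow> 0 \<le> W K h p q"
  unfolding W_def admissible_kernel_def by simp


lemma pair_lborel: "pair_sigma_finite lborel lborel"
  by (simp add: pair_sigma_finite.intro lborel.sigma_finite_measure_axioms)

lemma nn_int_lborel2:
  assumes [measurable]: "f \<in> borel_measurable (borel :: (real\<times>real) measure)"
  shows "(\<integral>\<^sup>+q. f q \<partial>lborel) = (\<integral>\<^sup>+x. (\<integral>\<^sup>+y. f (x,y) \<partial>lborel) \<partial>lborel)"
proof -
  have "(\<integral>\<^sup>+x. (\<integral>\<^sup>+y. f (x,y) \<partial>lborel) \<partial>lborel) = integral\<^sup>N (lborel \<Otimes>\<^sub>M lborel) f"
    by (rule lborel.nn_integral_fst) (simp add: lborel_prod)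
  then show ?thesis by (simp add: lborel_prod)
qed

lemma W_int_q:
  assumes "admissible_kernel K" "h > 0"
  shows "(\<integral>\<^sup>+q. ennreal (W K h p q) \<partial>lborel) = 1"
proof -
  have [measurable]: "K \<in> borel_measurable borel" using assms(1) by (rule adm_meas)
  have nn: "\<And>x. 0 \<le> K x" using assms(1) unfolding admissible_kernel_def by blast
  have e: "\<And>x y. ennreal (W K h p (x,y)) = ennreal (1/h\<^sup>2) * ennreal (K ((fst p - x)/h)) * ennreal (K ((snd p - y)/h))"
    unfolding W_def using nn by (simp add: ennreal_mult[symmetric] divide_inverse mult.commute mult.left_commute)
  have "(\<integral>\<^sup>+q. ennreal (W K h p q) \<partial>lborel) = (\<integral>\<^sup>+x. (\<integral>\<^sup>+y. ennreal (W K h p (x,y)) \<partial>lborel) \<partial>lborel)"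
    by (rule nn_int_lborel2) (unfold W_def borel_prod[symmetric], measurable)
  also have "\<dots> = (\<integral>\<^sup>+x. ennreal (1/h\<^sup>2) * ennreal (K ((fst p - x)/h)) * ennreal h \<partial>lborel)"
    unfolding e by (simp add: nn_integral_cmult K_aff1[OF assms])
  also have "\<dots> = ennreal (1/h\<^sup>2) * ennreal h * ennreal h"
    by (simp add: nn_integral_cmult nn_integral_multc K_aff1[OF assms])
  also have "\<dots> = 1" using assms(2) by (simp add: ennreal_mult[symmetric] power2_eq_square)
  finally show ?thesis .
qed

lemma W_int_p:
  assumes "admissible_kernel K" "h > 0"
  shows "(\<integral>\<^sup>+p. ennreal (W K h p q) \<partial>lborel) = 1"
proof -
  have [measurable]: "K \<in> borel_measurable borel" using assms(1) by (rule adm_meas)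
  have nn: "\<And>x. 0 \<le> K x" using assms(1) unfolding admissible_kernel_def by blast
  have e: "\<And>x y. ennreal (W K h (x,y) q) = ennreal (1/h\<^sup>2) * ennreal (K ((x - fst q)/h)) * ennreal (K ((y - snd q)/h))"
    unfolding W_def using nn by (simp add: ennreal_mult[symmetric] divide_inverse mult.commute mult.left_commute)
  have "(\<integral>\<^sup>+p. ennreal (W K h p q) \<partial>lborel) = (\<integral>\<^sup>+x. (\<integral>\<^sup>+y. ennreal (W K h (x,y) q) \<partial>lborel) \<partial>lborel)"
    by (rule nn_int_lborel2) (unfold W_def borel_prod[symmetric], measurable)
  also have "\<dots> = (\<integral>\<^sup>+x. ennreal (1/h\<^sup>2) * ennreal (K ((x - fst q)/h)) * ennreal h \<partial>lborel)"
    unfolding e by (simp add: nn_integral_cmult K_aff2[OF assms])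
  also have "\<dots> = ennreal (1/h\<^sup>2) * ennreal h * ennreal h"
    by (simp add: nn_integral_cmult nn_integral_multc K_aff2[OF assms])
  also have "\<dots> = 1" using assms(2) by (simp add: ennreal_mult[symmetric] power2_eq_square)
  finally show ?thesis .
qed

lemma W_support:
  assumes "admissible_kernel K" "h > 0" "W K h p q \<noteq> 0"
  shows "\<bar>fst p - fst q\<bar> \<le> h" "\<bar>snd p - snd q\<bar> \<le> h"
proof -
  have z: "\<And>x. x \<notin> {-1..1} \<Longrightarrow> K x = 0" using assms(1) unfolding admissible_kernel_def by blast
  have "K ((fst p - fst q)/h) \<noteq> 0" "K ((snd p - snd q)/h) \<noteq> 0" using assms(3) unfolding W_def by auto
  then have "(fst p - fst q)/h \<in> {-1..1}" "(snd p - snd q)/h \<in> {-1..1}" using z by blast+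
  then show "\<bar>fst p - fst q\<bar> \<le> h" "\<bar>snd p - snd q\<bar> \<le> h" using assms(2)
    by (auto simp: abs_le_iff field_simps)
qed

lemma W_bound:
  assumes "admissible_kernel K" "h > 0" "\<And>x. K x \<le> Kb"
  shows "W K h p q \<le> Kb\<^sup>2 / h\<^sup>2"
proof -
  have nn: "\<And>x. 0 \<le> K x" using assms(1) unfolding admissible_kernel_def by blast
  have "K ((fst p - fst q)/h) * K ((snd p - snd q)/h) \<le> Kb * Kb"
    using nn assms(3) by (intro mult_mono) (auto intro: order_trans)
  then show ?thesis unfolding W_def using assms(2) by (simp add: divide_right_mono power2_eq_square)
qed

lemma bounded_integrable:
  assumes "finite_measure M" "f \<in> borel_measurable M" "\<And>x. x \<in> space M \<Longrightarrow> \<bar>f x\<bar> \<le> (B::real)"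
  shows "integrable M f"
  using assms by (intro finite_measure.integrable_const_bound[where B=B]) auto

lemma iid_var:
  fixes \<mu> :: "'a measure" and g :: "'a \<Rightarrow> real"
  assumes P: "prob_space \<mu>" and gm[measurable]: "g \<in> borel_measurable \<mu>"
    and gb: "\<And>x. x \<in> space \<mu> \<Longrightarrow> \<bar>g x\<bar> \<le> B"
  shows "(\<integral>\<omega>. ((\<Sum>i<n. g (\<omega> i)) - real n * (\<integral>x. g x \<partial>\<mu>))\<^sup>2 \<partial>PiM {..<n} (\<lambda>_. \<mu>))
           \<le> real n * (\<integral>x. (g x)\<^sup>2 \<partial>\<mu>)"
proof -
  interpret \<mu>: prob_space \<mu> by (rule P)
  define P where "P = PiM {..<n} (\<lambda>_. \<mu>)"
  interpret PP: prob_space P unfolding P_def by (rule prob_space_PiM) (rule P)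
  interpret PS: product_sigma_finite "\<lambda>_::nat. \<mu>"
    by (simp add: product_sigma_finite_def \<mu>.sigma_finite_measure_axioms)
  define a where "a = (\<integral>x. g x \<partial>\<mu>)"
  define Z where "Z x = g x - a" for x
  have Zm[measurable]: "Z \<in> borel_measurable \<mu>" unfolding Z_def by measurable
  have ga: "\<bar>a\<bar> \<le> B"
  proof -
    have "\<bar>a\<bar> \<le> (\<integral>x. \<bar>g x\<bar> \<partial>\<mu>)" unfolding a_def by (rule integral_abs_bound)
    also have "\<dots> \<le> (\<integral>x. B \<partial>\<mu>)"
      using gb by (intro integral_mono bounded_integrable[where B=B]) (auto simp: \<mu>.finite_measure_axioms intro: order_trans[OF abs_ge_zero])
    also have "\<dots> = B" by (simp add: \<mu>.prob_space)
    finally show ?thesis .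
  qed
  have Zb: "\<And>x. x \<in> space \<mu> \<Longrightarrow> \<bar>Z x\<bar> \<le> 2*B" unfolding Z_def using gb ga by (smt (verit))
  have gi: "integrable \<mu> g" by (rule bounded_integrable[where B=B]) (auto simp: \<mu>.finite_measure_axioms gb)
  have Zi: "integrable \<mu> Z" by (rule bounded_integrable[where B="2*B"]) (auto simp: \<mu>.finite_measure_axioms Zb)
  have Z0: "(\<integral>x. Z x \<partial>\<mu>) = 0" unfolding Z_def a_def using gi by (simp add: \<mu>.prob_space)
  have g2i: "integrable \<mu> (\<lambda>x. (g x)\<^sup>2)"
  proof (rule bounded_integrable[where B="B*B"])
    show "finite_measure \<mu>" by (rule \<mu>.finite_measure_axioms)
    show "(\<lambda>x. (g x)\<^sup>2) \<in> borel_measurable \<mu>" by measurable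
    fix x assume "x \<in> space \<mu>"
    then have "\<bar>g x\<bar> * \<bar>g x\<bar> \<le> B * B" using gb by (intro mult_mono) (auto intro: order_trans[OF abs_ge_zero])
    then show "\<bar>(g x)\<^sup>2\<bar> \<le> B*B" by (simp add: power2_eq_square abs_mult)
  qed
  have Z2: "(\<integral>x. (Z x)\<^sup>2 \<partial>\<mu>) \<le> (\<integral>x. (g x)\<^sup>2 \<partial>\<mu>)"
  proof -
    have "(\<integral>x. (Z x)\<^sup>2 \<partial>\<mu>) = \<mu>.variance g" unfolding Z_def a_def ..
    also have "\<dots> = (\<integral>x. (g x)\<^sup>2 \<partial>\<mu>) - a\<^sup>2" unfolding a_def by (rule \<mu>.variance_eq[OF gi g2i])
    finally show ?thesis by simp
  qed
  have comp[measurable]: "\<And>i. i < n \<Longrightarrow> (\<lambda>\<omega>. Z (\<omega> i)) \<in> borel_measurable P"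
    unfolding P_def by measurable
  have prodint: "\<And>i j. i < n \<Longrightarrow> j < n \<Longrightarrow> integrable P (\<lambda>\<omega>. Z (\<omega> i) * Z (\<omega> j))"
  proof -
    fix i j assume ij: "i < n" "j < n"
    show "integrable P (\<lambda>\<omega>. Z (\<omega> i) * Z (\<omega> j))"
    proof (rule bounded_integrable[where B="2*B*(2*B)"])
      show "finite_measure P" by (rule PP.finite_measure_axioms)
      show "(\<lambda>\<omega>. Z (\<omega> i) * Z (\<omega> j)) \<in> borel_measurable P" using ij by measurable
      fix \<omega> assume "\<omega> \<in> space P"
      then have "\<omega> i \<in> space \<mu>" "\<omega> j \<in> space \<mu>" using ij unfolding P_def by (auto simp: space_PiM)
      then have "\<bar>Z (\<omega> i)\<bar> * \<bar>Z (\<omega> j)\<bar> \<le> 2*B*(2*B)" using Zb by (intro mult_mono) (auto intro: order_trans[OF abs_ge_zero], smt (verit) abs_ge_zero)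
      then show "\<bar>Z (\<omega> i) * Z (\<omega> j)\<bar> \<le> 2*B*(2*B)" by (simp add: abs_mult)
    qed
  qed
  have diag: "\<And>i. i < n \<Longrightarrow> (\<integral>\<omega>. Z (\<omega> i) * Z (\<omega> i) \<partial>P) = (\<integral>x. (Z x)\<^sup>2 \<partial>\<mu>)"
  proof -
    fix i assume i: "i < n"
    have "distr P \<mu> (\<lambda>\<omega>. \<omega> i) = \<mu>" unfolding P_def
      by (rule distr_PiM_component) (use i P in auto)
    then have "(\<integral>x. (Z x)\<^sup>2 \<partial>\<mu>) = (\<integral>x. (Z x)\<^sup>2 \<partial>distr P \<mu> (\<lambda>\<omega>. \<omega> i))" by simp
    also have "\<dots> = (\<integral>\<omega>. (Z (\<omega> i))\<^sup>2 \<partial>P)"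
      by (rule integral_distr) (use i in \<open>unfold P_def, measurable\<close>)
    finally show "(\<integral>\<omega>. Z (\<omega> i) * Z (\<omega> i) \<partial>P) = (\<integral>x. (Z x)\<^sup>2 \<partial>\<mu>)"
      by (simp add: power2_eq_square)
  qed
  have cross: "\<And>i j. i < n \<Longrightarrow> j < n \<Longrightarrow> i \<noteq> j \<Longrightarrow> (\<integral>\<omega>. Z (\<omega> i) * Z (\<omega> j) \<partial>P) = 0"
  proof -
    fix i j assume ij: "i < n" "j < n" "i \<noteq> j"
    define f where "f k x = (if k = i \<or> k = j then Z x else 1)" for k x
    have "(\<integral>\<omega>. (\<Prod>k\<in>{..<n}. f k (\<omega> k)) \<partial>P) = (\<Prod>k\<in>{..<n}. (\<integral>x. f k x \<partial>\<mu>))"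
      unfolding P_def
    proof (rule PS.product_integral_prod)
      fix k assume "k \<in> {..<n}"
      show "integrable \<mu> (f k)" unfolding f_def using Zi by (cases "k = i \<or> k = j") auto
    qed simp
    moreover have "\<And>\<omega>. (\<Prod>k\<in>{..<n}. f k (\<omega> k)) = Z (\<omega> i) * Z (\<omega> j)"
    proof -
      fix \<omega> :: "nat \<Rightarrow> 'a"
      have "(\<Prod>k\<in>{..<n}. f k (\<omega> k)) = (\<Prod>k\<in>{i,j}. f k (\<omega> k))"
        by (rule prod.mono_neutral_right) (use ij in \<open>auto simp: f_def\<close>)
      then show "(\<Prod>k\<in>{..<n}. f k (\<omega> k)) = Z (\<omega> i) * Z (\<omega> j)" using ij by (simp add: f_def)
    qed
    moreover have "(\<Prod>k\<in>{..<n}. (\<integral>x. f k x \<partial>\<mu>)) = 0"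
      using ij Z0 by (intro prod_zero bexI[of _ i]) (auto simp: f_def)
    ultimately show "(\<integral>\<omega>. Z (\<omega> i) * Z (\<omega> j) \<partial>P) = 0" by simp
  qed
  have eq: "\<And>\<omega>. ((\<Sum>i<n. g (\<omega> i)) - real n * a)\<^sup>2 = (\<Sum>i<n. \<Sum>j<n. Z (\<omega> i) * Z (\<omega> j))"
  proof -
    fix \<omega> :: "nat \<Rightarrow> 'a"
    have "(\<Sum>i<n. g (\<omega> i)) - real n * a = (\<Sum>i<n. Z (\<omega> i))"
      unfolding Z_def by (simp add: sum_subtractf)
    then show "((\<Sum>i<n. g (\<omega> i)) - real n * a)\<^sup>2 = (\<Sum>i<n. \<Sum>j<n. Z (\<omega> i) * Z (\<omega> j))"
      by (simp add: power2_eq_square sum_product)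
  qed
  have "(\<integral>\<omega>. ((\<Sum>i<n. g (\<omega> i)) - real n * a)\<^sup>2 \<partial>P) = (\<Sum>i<n. \<Sum>j<n. (\<integral>\<omega>. Z (\<omega> i) * Z (\<omega> j) \<partial>P))"
  proof -
    have "(\<integral>\<omega>. (\<Sum>i<n. \<Sum>j<n. Z (\<omega> i) * Z (\<omega> j)) \<partial>P) = (\<Sum>i<n. (\<integral>\<omega>. (\<Sum>j<n. Z (\<omega> i) * Z (\<omega> j)) \<partial>P))"
      by (rule Bochner_Integration.integral_sum, rule Bochner_Integration.integrable_sum) (use prodint in auto)
    also have "\<dots> = (\<Sum>i<n. \<Sum>j<n. (\<integral>\<omega>. Z (\<omega> i) * Z (\<omega> j) \<partial>P))"
      by (intro sum.cong refl Bochner_Integration.integral_sum) (use prodint in auto)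
    finally show ?thesis unfolding eq .
  qed
  also have "\<dots> = (\<Sum>i<n. (\<integral>x. (Z x)\<^sup>2 \<partial>\<mu>))"
  proof (rule sum.cong[OF refl])
    fix i assume i: "i \<in> {..<n}"
    have "(\<Sum>j<n. (\<integral>\<omega>. Z (\<omega> i) * Z (\<omega> j) \<partial>P)) = (\<Sum>j\<in>{i}. (\<integral>\<omega>. Z (\<omega> i) * Z (\<omega> j) \<partial>P))"
      by (rule sum.mono_neutral_right) (use i cross in auto)
    then show "(\<Sum>j<n. (\<integral>\<omega>. Z (\<omega> i) * Z (\<omega> j) \<partial>P)) = (\<integral>x. (Z x)\<^sup>2 \<partial>\<mu>)" using diag i by simp
  qed
  also have "\<dots> \<le> real n * (\<integral>x. (g x)\<^sup>2 \<partial>\<mu>)" using Z2 by (simp add: mult_left_mono)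
  finally show ?thesis unfolding P_def a_def .
qed

definition c1 :: "(real \<times> real \<Rightarrow> real) \<Rightarrow> real \<times> real \<Rightarrow> real" where
  "c1 c q = indicator unit_sq q * c q"

lemma c1_int: "is_copula_density c \<Longrightarrow> integrable lborel (c1 c)"
  unfolding is_copula_density_def set_integrable_def c1_def by simp

lemma c1_meas: "is_copula_density c \<Longrightarrow> c1 c \<in> borel_measurable borel"
proof -
  assume "is_copula_density c"
  then have "c1 c \<in> borel_measurable lborel" using c1_int borel_measurable_integrable by blast
  then show ?thesis by simp
qed

lemma c1_total: "is_copula_density c \<Longrightarrow> (\<integral>q. c1 c q \<partial>lborel) = 1"
proof -
  assume "is_copula_density c"
  then have "(LINT p:({0..1} \<times> {0..1})|lborel. c p) = 1" unfolding is_copula_density_def by auto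
  then show ?thesis unfolding c1_def unit_sq_def set_lebesgue_integral_def by simp
qed

lemma null_line1: "emeasure lborel ({a::real} \<times> (UNIV::real set)) = 0"
proof -
  have "emeasure (lborel \<Otimes>\<^sub>M lborel) ({a::real} \<times> (UNIV::real set)) = emeasure lborel {a} * emeasure lborel (UNIV::real set)"
    by (rule lborel.emeasure_pair_measure_Times) auto
  then show ?thesis by (simp add: lborel_prod)
qed

lemma null_line2: "emeasure lborel ((UNIV::real set) \<times> {a::real}) = 0"
proof -
  have "emeasure (lborel \<Otimes>\<^sub>M lborel) ((UNIV::real set) \<times> {a::real}) = emeasure lborel (UNIV::real set) * emeasure lborel {a}"
    by (rule lborel.emeasure_pair_measure_Times) auto
  then show ?thesis by (simp add: lborel_prod)
qed

lemma AE_open_sq: "AE q in lborel. q \<in> unit_sq \<longrightarrow> q \<in> open_unit_sq"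
proof (rule AE_I')
  define N where "N = ({0::real} \<times> (UNIV::real set)) \<union> ({1} \<times> UNIV) \<union> (UNIV \<times> {0}) \<union> (UNIV \<times> {1})"
  show "N \<in> null_sets lborel"
    unfolding N_def using null_line1 null_line2 by (intro null_sets.Un) (auto simp: null_sets_def intro!: borel_closed closed_Times)
  show "{q \<in> space lborel. \<not> (q \<in> unit_sq \<longrightarrow> q \<in> open_unit_sq)} \<subseteq> N"
    unfolding N_def unit_sq_def open_unit_sq_def by auto
qed

lemma c1_nonneg_AE: "is_copula_density c \<Longrightarrow> AE q in lborel. 0 \<le> c1 c q"
proof -
  assume c: "is_copula_density c"
  show ?thesis using AE_open_sq
  proof eventually_elim
    case (elim q) then show ?case using c unfolding c1_def is_copula_density_def
      by (auto simp: indicator_def)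
  qed
qed

lemma copula_measure_eq: "copula_measure c = density lborel (\<lambda>q. ennreal (c1 c q))"
  unfolding copula_measure_def c1_def
  by (intro arg_cong[where f="density lborel"] ext) (auto simp: indicator_def)

lemma prob_copula: "is_copula_density c \<Longrightarrow> prob_space (copula_measure c)"
proof -
  assume c: "is_copula_density c"
  show ?thesis
  proof
    have "emeasure (copula_measure c) (space (copula_measure c)) = (\<integral>\<^sup>+q. ennreal (c1 c q) \<partial>lborel)"
      unfolding copula_measure_eq using c c1_meas[OF c] by (simp add: emeasure_density)
    also have "\<dots> = ennreal (\<integral>q. c1 c q \<partial>lborel)"
      by (rule nn_integral_eq_integral) (use c c1_int c1_nonneg_AE in auto)
    also have "\<dots> = 1" using c c1_total by simp
    finally show "emeasure (copula_measure c) (space (copula_measure c)) = 1" .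
  qed
qed

lemma sets_copula[simp, measurable_cong]: "sets (copula_measure c) = sets borel"
  unfolding copula_measure_eq by simp

lemma space_copula[simp]: "space (copula_measure c) = UNIV"
  unfolding copula_measure_eq by simp

lemma integral_copula:
  assumes c: "is_copula_density c" and f[measurable]: "f \<in> borel_measurable borel"
  shows "(\<integral>q. f q \<partial>copula_measure c) = (\<integral>q. c1 c q * f q \<partial>lborel)"
proof -
  have "(\<integral>q. f q \<partial>copula_measure c) = (\<integral>q. c1 c q *\<^sub>R f q \<partial>lborel)"
    unfolding copula_measure_eq using c c1_meas[OF c] by (intro integral_density) (auto simp: c1_nonneg_AE)
  then show ?thesis by simp
qed

lemma nn_integral_copula:
  assumes c: "is_copula_density c" and f[measurable]: "f \<in> borel_measurable borel"
  shows "(\<integral>\<^sup>+q. f q \<partial>copula_measure c) = (\<integral>\<^sup>+q. ennreal (c1 c q) * f q \<partial>lborel)"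
  unfolding copula_measure_eq using c c1_meas[OF c] by (intro nn_integral_density) auto

definition mK :: "(real \<Rightarrow> real) \<Rightarrow> real \<Rightarrow> (real \<times> real \<Rightarrow> real) \<Rightarrow> real \<times> real \<Rightarrow> real" where
  "mK K h c p = (\<integral>q. W K h p q \<partial>copula_measure c)"

lemma kde_W: "n \<ge> 1 \<Longrightarrow> kde K n h \<omega> p = (1/real n) * (\<Sum>i<n. W K h p (\<omega> i))"
  unfolding kde_def W_def by (simp add: sum_divide_distrib[symmetric] field_simps)

lemma W_meas_borel:
  assumes "admissible_kernel K"
  shows "(\<lambda>q. W K h p q) \<in> borel_measurable borel"
proof -
  have [measurable]: "K \<in> borel_measurable borel" using assms by (rule adm_meas)
  show ?thesis unfolding W_def borel_prod[symmetric] by measurable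
qed

lemma mK_nonneg: "admissible_kernel K \<Longrightarrow> 0 \<le> mK K h c p"
  unfolding mK_def by (rule integral_nonneg_AE) (simp add: W_nonneg)

lemma pointwise_var:
  assumes K: "admissible_kernel K" and Kb: "Kb > 0" "\<And>x. K x \<le> Kb"
    and c: "is_copula_density c" and n: "n \<ge> 1" and h: "h > 0"
  shows "(\<integral>\<^sup>+\<omega>. ennreal \<bar>kde K n h \<omega> p - mK K h c p\<bar> \<partial>sample_law c n)
           \<le> ennreal (Kb / sqrt (real n * h\<^sup>2) * ((mK K h c p + 2) / 2))"
proof -
  define \<mu> where "\<mu> = copula_measure c"
  define P where "P = sample_law c n"
  interpret \<mu>: prob_space \<mu> unfolding \<mu>_def by (rule prob_copula[OF c])
  interpret PP: prob_space P unfolding P_def sample_law_def by (rule prob_space_PiM) (rule prob_copula[OF c])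
  define g where "g = W K h p"
  define m where "m = mK K h c p"
  have m_def': "m = (\<integral>x. g x \<partial>\<mu>)" unfolding m_def mK_def g_def \<mu>_def ..
  have gm[measurable]: "g \<in> borel_measurable \<mu>" unfolding g_def \<mu>_def
    using W_meas_borel[OF K] by (subst measurable_cong_sets[OF sets_copula refl])
  define B where "B = Kb\<^sup>2 / h\<^sup>2"
  have g0: "\<And>x. 0 \<le> g x" unfolding g_def using W_nonneg[OF K] by blast
  have gB: "\<And>x. g x \<le> B" unfolding g_def B_def by (rule W_bound[OF K h Kb(2)])
  have gb: "\<And>x. \<bar>g x\<bar> \<le> B" using g0 gB by simp
  have B0: "0 \<le> B" unfolding B_def by simp
  have m0: "0 \<le> m" unfolding m_def by (rule mK_nonneg[OF K])
  have gi: "integrable \<mu> g" by (rule bounded_integrable[where B=B]) (auto simp: \<mu>.finite_measure_axioms gb)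
  have g2: "(\<integral>x. (g x)\<^sup>2 \<partial>\<mu>) \<le> B * m"
  proof -
    have "(\<integral>x. (g x)\<^sup>2 \<partial>\<mu>) \<le> (\<integral>x. B * g x \<partial>\<mu>)"
    proof (rule integral_mono)
      show "integrable \<mu> (\<lambda>x. (g x)\<^sup>2)"
        by (rule bounded_integrable[where B="B*B"]) (auto simp: \<mu>.finite_measure_axioms power2_eq_square abs_mult intro!: mult_mono gb g0 gB B0)
      show "integrable \<mu> (\<lambda>x. B * g x)" using gi by simp
      fix x show "(g x)\<^sup>2 \<le> B * g x" using g0[of x] gB[of x] by (simp add: power2_eq_square mult_right_mono)
    qed
    then show ?thesis unfolding m_def' by simp
  qed
  have var: "(\<integral>\<omega>. ((\<Sum>i<n. g (\<omega> i)) - real n * m)\<^sup>2 \<partial>P) \<le> real n * (\<integral>x. (g x)\<^sup>2 \<partial>\<mu>)"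
    unfolding P_def sample_law_def \<mu>_def[symmetric] m_def'
    by (rule iid_var[where B=B]) (auto simp: \<mu>.prob_space_axioms gb)
  define X where "X \<omega> = kde K n h \<omega> p - m" for \<omega>
  have Xe: "\<And>\<omega>. X \<omega> = ((\<Sum>i<n. g (\<omega> i)) - real n * m) / real n"
    unfolding X_def kde_W[OF n] g_def using n by (simp add: field_simps)
  have comp[measurable]: "\<And>i. i < n \<Longrightarrow> (\<lambda>\<omega>. g (\<omega> i)) \<in> borel_measurable P"
    unfolding P_def sample_law_def \<mu>_def[symmetric] by measurable
  have Xm[measurable]: "X \<in> borel_measurable P" unfolding Xe by measurable
  have EX2: "(\<integral>\<omega>. (X \<omega>)\<^sup>2 \<partial>P) \<le> B * m / real n"
  proof -
    have "(\<integral>\<omega>. (X \<omega>)\<^sup>2 \<partial>P) = (\<integral>\<omega>. ((\<Sum>i<n. g (\<omega> i)) - real n * m)\<^sup>2 \<partial>P) / (real n)\<^sup>2"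
      unfolding Xe by (simp add: power_divide)
    also have "\<dots> \<le> real n * (B * m) / (real n)\<^sup>2"
      using var g2 n by (intro divide_right_mono) (auto intro: order_trans mult_left_mono)
    also have "\<dots> = B * m / real n" using n by (simp add: power2_eq_square)
    finally show ?thesis .
  qed
  have Xb: "\<And>\<omega>. \<omega> \<in> space P \<Longrightarrow> \<bar>X \<omega>\<bar> \<le> B + m"
  proof -
    fix \<omega> :: "nat \<Rightarrow> real \<times> real"
    have "0 \<le> (\<Sum>i<n. g (\<omega> i))" using g0 by (simp add: sum_nonneg)
    moreover have "(\<Sum>i<n. g (\<omega> i)) \<le> real n * B" using gB sum_bounded_above[of "{..<n}" "\<lambda>i. g (\<omega> i)" B] by simp
    ultimately have "0 \<le> (\<Sum>i<n. g (\<omega> i)) / real n" "(\<Sum>i<n. g (\<omega> i)) / real n \<le> B"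
      using n by (auto simp: field_simps)
    moreover have "X \<omega> = (\<Sum>i<n. g (\<omega> i)) / real n - m" unfolding Xe using n by (simp add: field_simps)
    ultimately show "\<bar>X \<omega>\<bar> \<le> B + m" using m0 by linarith
  qed
  define s where "s = Kb\<^sup>2 / (real n * h\<^sup>2)"
  have s0: "s > 0" unfolding s_def using Kb n h by simp
  have sB: "B / real n = s" unfolding s_def B_def by simp
  define t where "t = sqrt (s * (m + 1))"
  have t0: "t > 0" unfolding t_def using s0 m0 by simp
  have tt: "t * t = s * (m + 1)" unfolding t_def using s0 m0 by simp
  have X2i: "integrable P (\<lambda>\<omega>. (X \<omega>)\<^sup>2)"
  proof (rule bounded_integrable[where B="(B+m)*(B+m)"])
    show "finite_measure P" by (rule PP.finite_measure_axioms)
    show "(\<lambda>\<omega>. (X \<omega>)\<^sup>2) \<in> borel_measurable P" by measurable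
    fix \<omega> assume w: "\<omega> \<in> space P"
    have "\<bar>X \<omega>\<bar> * \<bar>X \<omega>\<bar> \<le> (B+m)*(B+m)" using Xb[OF w] by (intro mult_mono) auto
    then show "\<bar>(X \<omega>)\<^sup>2\<bar> \<le> (B+m)*(B+m)" by (simp add: power2_eq_square abs_mult)
  qed
  have Xai: "integrable P (\<lambda>\<omega>. \<bar>X \<omega>\<bar>)"
    by (rule bounded_integrable[where B="B+m"]) (auto simp: PP.finite_measure_axioms Xb)
  have nnX: "(\<integral>\<^sup>+\<omega>. ennreal \<bar>X \<omega>\<bar> \<partial>P) = ennreal (\<integral>\<omega>. \<bar>X \<omega>\<bar> \<partial>P)"
    by (rule nn_integral_eq_integral[OF Xai]) auto
  have "(\<integral>\<omega>. \<bar>X \<omega>\<bar> \<partial>P) \<le> (\<integral>\<omega>. t/2 + (X \<omega>)\<^sup>2 / (2*t) \<partial>P)"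
  proof (rule integral_mono[OF Xai])
    show "integrable P (\<lambda>\<omega>. t/2 + (X \<omega>)\<^sup>2 / (2*t))" using X2i by simp
    fix \<omega>
    have "0 \<le> (\<bar>X \<omega>\<bar> - t)\<^sup>2" by simp
    then have "2 * t * \<bar>X \<omega>\<bar> \<le> t * t + (X \<omega>)\<^sup>2" by (simp add: power2_eq_square algebra_simps)
    then show "\<bar>X \<omega>\<bar> \<le> t/2 + (X \<omega>)\<^sup>2 / (2*t)" using t0 by (simp add: field_simps)
  qed
  also have "(\<integral>\<omega>. t/2 + (X \<omega>)\<^sup>2 / (2*t) \<partial>P) = t/2 + (\<integral>\<omega>. (X \<omega>)\<^sup>2 \<partial>P) / (2*t)"
    using X2i by (simp add: PP.prob_space)
  also have "\<dots> \<le> t/2 + (s * (m+1)) / (2*t)"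
  proof -
    have "(\<integral>\<omega>. (X \<omega>)\<^sup>2 \<partial>P) \<le> s * (m+1)"
      using EX2 sB s0 by (smt (verit, best) mult_left_mono times_divide_eq_left mult.commute)
    then show ?thesis using t0 by (simp add: divide_right_mono)
  qed
  also have "\<dots> = t" using tt t0 by (simp add: field_simps)
  also have "t \<le> Kb / sqrt (real n * h\<^sup>2) * ((m + 2) / 2)"
  proof -
    have "t = sqrt s * sqrt (m+1)" unfolding t_def by (simp add: real_sqrt_mult)
    also have "sqrt s = Kb / sqrt (real n * h\<^sup>2)" unfolding s_def using Kb by (simp add: real_sqrt_divide)
    also have "sqrt (m+1) \<le> (m+2)/2"
    proof -
      have "(sqrt (m+1))\<^sup>2 = m + 1" using m0 by simp
      moreover have "0 \<le> (sqrt (m+1) - 1)\<^sup>2" by simp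
      ultimately show ?thesis by (simp add: power2_eq_square algebra_simps)
    qed
    then have "Kb / sqrt (real n * h\<^sup>2) * sqrt (m+1) \<le> Kb / sqrt (real n * h\<^sup>2) * ((m+2)/2)"
      using Kb by (intro mult_left_mono) auto
    finally show ?thesis .
  qed
  finally have "(\<integral>\<omega>. \<bar>X \<omega>\<bar> \<partial>P) \<le> Kb / sqrt (real n * h\<^sup>2) * ((m + 2) / 2)" .
  then have "(\<integral>\<^sup>+\<omega>. ennreal \<bar>X \<omega>\<bar> \<partial>P) \<le> ennreal (Kb / sqrt (real n * h\<^sup>2) * ((m + 2) / 2))"
    unfolding nnX by (rule ennreal_leI)
  then show ?thesis unfolding X_def P_def m_def .
qed

lemma dist_le_box: "dist (p::real\<times>real) q \<le> \<bar>fst p - fst q\<bar> + \<bar>snd p - snd q\<bar>"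
proof -
  have "dist p q = sqrt ((dist (fst p) (fst q))\<^sup>2 + (dist (snd p) (snd q))\<^sup>2)"
    by (metis dist_Pair_Pair prod.collapse)
  also have "\<dots> \<le> \<bar>dist (fst p) (fst q)\<bar> + \<bar>dist (snd p) (snd q)\<bar>" by (rule sqrt_sum_squares_le_sum_abs)
  finally show ?thesis by (simp add: dist_real_def)
qed

lemma convex_open_sq: "convex open_unit_sq"
  unfolding open_unit_sq_def by (intro convex_Times convex_real_interval)

lemma cross_lemma:
  assumes cl: "c \<in> copula_class M M1"
    and p: "p \<in> open_unit_sq" and q: "q \<in> open_unit_sq"
    and a: "c p < a" "a \<le> c q" "a < M"
  shows "a - c p \<le> M1 * dist p q"
proof -
  have cont: "continuous_on open_unit_sq c"
    and lip: "\<And>p q. p \<in> open_unit_sq \<Longrightarrow> q \<in> open_unit_sq \<Longrightarrow> c p < M \<Longrightarrow> c q < M \<Longrightarrow> \<bar>c p - c q\<bar> \<le> M1 * dist p q"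
    using cl unfolding copula_class_def by auto
  define \<gamma> where "\<gamma> t = p + t *\<^sub>R (q - p)" for t :: real
  have \<gamma>in: "\<And>t. t \<in> {0..1} \<Longrightarrow> \<gamma> t \<in> open_unit_sq"
  proof -
    fix t :: real assume t: "t \<in> {0..1}"
    have "(1 - t) *\<^sub>R p + t *\<^sub>R q \<in> open_unit_sq"
      using convex_open_sq p q t unfolding convex_def by auto
    moreover have "\<gamma> t = (1 - t) *\<^sub>R p + t *\<^sub>R q" unfolding \<gamma>_def by (simp add: algebra_simps)
    ultimately show "\<gamma> t \<in> open_unit_sq" by simp
  qed
  have "continuous_on {0..1} (c \<circ> \<gamma>)"
  proof (rule continuous_on_compose)
    show "continuous_on {0..1} \<gamma>" unfolding \<gamma>_def by (intro continuous_intros)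
    show "continuous_on (\<gamma> ` {0..1}) c" using \<gamma>in by (intro continuous_on_subset[OF cont]) auto
  qed
  moreover have "(c \<circ> \<gamma>) 0 \<le> a" "a \<le> (c \<circ> \<gamma>) 1" using a unfolding \<gamma>_def by auto
  ultimately obtain t where t: "0 \<le> t" "t \<le> 1" "(c \<circ> \<gamma>) t = a"
    using IVT'[of "c \<circ> \<gamma>" 0 a 1] by auto
  have r: "\<gamma> t \<in> open_unit_sq" using \<gamma>in t by auto
  have "\<bar>c (\<gamma> t) - c p\<bar> \<le> M1 * dist (\<gamma> t) p"
    using lip[OF r p] t a by auto
  moreover have "dist (\<gamma> t) p = t * dist p q"
    unfolding \<gamma>_def dist_norm using t by (simp add: norm_minus_commute)
  moreover have "M1 \<ge> 0"
  proof -
    have "\<bar>c p - c p\<bar> \<le> M1 * dist p p" using lip[OF p p] a by auto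
    have "0 \<le> M1 * dist (\<gamma> t) p" using \<open>\<bar>c (\<gamma> t) - c p\<bar> \<le> M1 * dist (\<gamma> t) p\<close> by linarith
    moreover have "\<gamma> t \<noteq> p" using t a by auto
    ultimately show ?thesis by (simp add: zero_le_mult_iff)
  qed
  ultimately have "a - c p \<le> M1 * (t * dist p q)" using t by auto
  also have "\<dots> \<le> M1 * dist p q" using t \<open>M1 \<ge> 0\<close> by (intro mult_left_mono) (auto intro: mult_left_le_one_le)
  finally show ?thesis .
qed

definition inner_sq :: "real \<Rightarrow> (real \<times> real) set" where
  "inner_sq h = {h<..<1-h} \<times> {h<..<1-h}"

lemma W_integrable:
  assumes K: "admissible_kernel K" and h: "h > 0"
  shows "integrable lborel (W K h p)" "(\<integral>q. W K h p q \<partial>lborel) = 1"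
proof -
  have m: "W K h p \<in> borel_measurable lborel" using W_meas_borel[OF K] by simp
  have nn: "(\<integral>\<^sup>+q. ennreal (W K h p q) \<partial>lborel) = 1" by (rule W_int_q[OF K h])
  show i: "integrable lborel (W K h p)"
    using m nn W_nonneg[OF K] by (intro integrableI_nonneg) auto
  have "(\<integral>\<^sup>+q. ennreal (W K h p q) \<partial>lborel) = ennreal (\<integral>q. W K h p q \<partial>lborel)"
    by (rule nn_integral_eq_integral[OF i]) (simp add: W_nonneg[OF K])
  then show "(\<integral>q. W K h p q \<partial>lborel) = 1" using nn by simp
qed

lemma Wc1_integrable:
  assumes K: "admissible_kernel K" and h: "h > 0" and Kb: "\<And>x. K x \<le> Kb"
    and c: "is_copula_density c"
  shows "integrable lborel (\<lambda>q. c1 c q * W K h p q)"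
proof (rule Bochner_Integration.integrable_bound)
  show "integrable lborel (\<lambda>q. Kb\<^sup>2 / h\<^sup>2 * c1 c q)" using c1_int[OF c] by simp
  show "(\<lambda>q. c1 c q * W K h p q) \<in> borel_measurable lborel"
    using c1_meas[OF c] W_meas_borel[OF K] by simp
  show "AE q in lborel. norm (c1 c q * W K h p q) \<le> norm (Kb\<^sup>2 / h\<^sup>2 * c1 c q)"
  proof (rule AE_I2)
    fix q
    have "\<bar>c1 c q\<bar> * W K h p q \<le> \<bar>c1 c q\<bar> * (Kb\<^sup>2 / h\<^sup>2)"
      by (intro mult_left_mono W_bound[OF K h Kb]) auto
    then show "norm (c1 c q * W K h p q) \<le> norm (Kb\<^sup>2 / h\<^sup>2 * c1 c q)"
      using W_nonneg[OF K] by (simp add: abs_mult mult.commute)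
  qed
qed

lemma mK_eq:
  assumes K: "admissible_kernel K" and c: "is_copula_density c"
  shows "mK K h c p = (\<integral>q. c1 c q * W K h p q \<partial>lborel)"
  unfolding mK_def by (rule integral_copula[OF c W_meas_borel[OF K]])

lemma open_sub_sq: "open_unit_sq \<subseteq> unit_sq"
  unfolding open_unit_sq_def unit_sq_def by auto

lemma contra_aux:
  assumes "(1 + M) / 2 + (M - 1) / 4 - cp \<le> Y" "cp < (1 + M) / 2" "Y \<le> (M - 1) / 8" "1 < (M::real)"
  shows False
proof -
  have "(M - 1) / 4 < Y" using assms(1,2) by (simp add: field_simps)
  then show False using assms(3,4) by (simp add: field_simps)
qed

lemma contra_aux2:
  assumes "(1 + M) / 2 - cq \<le> Y" "cq < 1" "Y \<le> (M - 1) / 8" "1 < (M::real)"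
  shows False
proof -
  have "(M - 1) / 2 < Y" using assms(1,2) by (simp add: field_simps)
  then show False using assms(3,4) by (simp add: field_simps)
qed

lemma max_lip: "\<bar>max 0 (1 - a) - max 0 (1 - b)\<bar> \<le> \<bar>a - (b::real)\<bar>"
  by (auto simp: max_def)

lemma bias_inner:
  assumes cl: "c \<in> copula_class M M1" and M: "M > 1" "M1 > 0"
    and K: "admissible_kernel K" and Kb: "\<And>x. K x \<le> Kb"
    and h: "0 < h" "h \<le> 1/4" "h \<le> (M - 1) / (16 * M1)"
    and p: "p \<in> inner_sq h"
  shows "\<bar>max 0 (1 - mK K h c p) - max 0 (1 - c p)\<bar> \<le> 2 * M1 * h"
proof -
  have c: "is_copula_density c" using cl unfolding copula_class_def by auto
  have lip: "\<And>p q. p \<in> open_unit_sq \<Longrightarrow> q \<in> open_unit_sq \<Longrightarrow> c p < M \<Longrightarrow> c q < M \<Longrightarrow> \<bar>c p - c q\<bar> \<le> M1 * dist p q"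
    using cl unfolding copula_class_def by auto
  have hM: "2 * M1 * h \<le> (M - 1) / 8" using h M by (simp add: field_simps)
  have hM': "M1 * (2 * h) \<le> (M - 1) / 8" using hM by (simp add: mult.assoc mult.left_commute)
  have p_open: "p \<in> open_unit_sq" using p h unfolding inner_sq_def open_unit_sq_def by (auto simp: mem_Times_iff)
  have box: "\<And>q. W K h p q \<noteq> 0 \<Longrightarrow> q \<in> open_unit_sq \<and> dist p q \<le> 2 * h"
  proof -
    fix q assume "W K h p q \<noteq> 0"
    then have s: "\<bar>fst p - fst q\<bar> \<le> h" "\<bar>snd p - snd q\<bar> \<le> h" using W_support[OF K h(1)] by auto
    then have "q \<in> open_unit_sq" using p unfolding inner_sq_def open_unit_sq_def
      by (auto simp: mem_Times_iff abs_le_iff)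
    moreover have "dist p q \<le> 2 * h" using dist_le_box[of p q] s by linarith
    ultimately show "q \<in> open_unit_sq \<and> dist p q \<le> 2 * h" by blast
  qed
  have c1eq: "\<And>q. W K h p q \<noteq> 0 \<Longrightarrow> c1 c q = c q"
  proof -
    fix q assume "W K h p q \<noteq> 0"
    then have "q \<in> open_unit_sq" using box by blast
    then have "q \<in> unit_sq" using open_sub_sq by blast
    then show "c1 c q = c q" unfolding c1_def by simp
  qed
  have Wi: "integrable lborel (W K h p)" and W1: "(\<integral>q. W K h p q \<partial>lborel) = 1"
    using W_integrable[OF K h(1)] by auto
  have Wci: "integrable lborel (\<lambda>q. c1 c q * W K h p q)" by (rule Wc1_integrable[OF K h(1) Kb c])
  have mK: "mK K h c p = (\<integral>q. c1 c q * W K h p q \<partial>lborel)" by (rule mK_eq[OF K c])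
  have W0: "\<And>q. 0 \<le> W K h p q" using W_nonneg[OF K] by blast
  show ?thesis
  proof (cases "c p < (1 + M) / 2")
    case True
    have near: "\<And>q. W K h p q \<noteq> 0 \<Longrightarrow> \<bar>c1 c q - c p\<bar> \<le> 2 * M1 * h"
    proof -
      fix q assume Wq: "W K h p q \<noteq> 0"
      have q: "q \<in> open_unit_sq" "dist p q \<le> 2 * h" using box[OF Wq] by auto
      have "c q < (1 + M) / 2 + (M - 1) / 4"
      proof (rule ccontr)
        assume "\<not> ?thesis"
        then have ge: "(1 + M) / 2 + (M - 1) / 4 \<le> c q" by simp
        have "(1 + M) / 2 + (M - 1) / 4 - c p \<le> M1 * dist p q"
          by (rule cross_lemma[OF cl p_open q(1)]) (use True ge M in \<open>auto simp: field_simps\<close>)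
        also have "\<dots> \<le> M1 * (2 * h)" using q(2) M by (intro mult_left_mono) auto
        finally show False using True hM' M by (intro contra_aux)
      qed
      then have "c q < M" using M by (simp add: field_simps)
      moreover have "c p < M" using True M by simp
      ultimately have "\<bar>c q - c p\<bar> \<le> M1 * dist q p" using lip[OF q(1) p_open] by simp
      also have "\<dots> \<le> M1 * (2 * h)" using q(2) M by (intro mult_left_mono) (auto simp: dist_commute)
      finally show "\<bar>c1 c q - c p\<bar> \<le> 2 * M1 * h" using c1eq[OF Wq] by simp
    qed
    have "mK K h c p - c p = (\<integral>q. c1 c q * W K h p q \<partial>lborel) - c p * (\<integral>q. W K h p q \<partial>lborel)"
      using mK W1 by simp
    also have "\<dots> = (\<integral>q. (c1 c q - c p) * W K h p q \<partial>lborel)"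
      using Wi Wci by (simp add: left_diff_distrib)
    finally have eq: "mK K h c p - c p = (\<integral>q. (c1 c q - c p) * W K h p q \<partial>lborel)" .
    have "\<bar>mK K h c p - c p\<bar> \<le> (\<integral>q. \<bar>(c1 c q - c p) * W K h p q\<bar> \<partial>lborel)"
      unfolding eq by (rule integral_abs_bound)
    also have "\<dots> \<le> (\<integral>q. 2 * M1 * h * W K h p q \<partial>lborel)"
    proof (rule integral_mono)
      show "integrable lborel (\<lambda>q. \<bar>(c1 c q - c p) * W K h p q\<bar>)"
        using Wi Wci by (intro integrable_abs) (simp add: left_diff_distrib)
      show "integrable lborel (\<lambda>q. 2 * M1 * h * W K h p q)" using Wi by simp
      fix q show "\<bar>(c1 c q - c p) * W K h p q\<bar> \<le> 2 * M1 * h * W K h p q"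
      proof (cases "W K h p q = 0")
        case False
        then show ?thesis using near[OF False] W0[of q] by (simp add: abs_mult mult_right_mono)
      qed simp
    qed
    also have "\<dots> = 2 * M1 * h" using W1 by simp
    finally have "\<bar>mK K h c p - c p\<bar> \<le> 2 * M1 * h" .
    then show ?thesis using max_lip[of "mK K h c p" "c p"] by linarith
  next
    case False
    have ge1: "\<And>q. W K h p q \<noteq> 0 \<Longrightarrow> 1 \<le> c1 c q"
    proof (rule ccontr)
      fix q assume Wq: "W K h p q \<noteq> 0" and n1: "\<not> 1 \<le> c1 c q"
      have q: "q \<in> open_unit_sq" "dist p q \<le> 2 * h" using box[OF Wq] by auto
      have cq: "c q < 1" using n1 c1eq[OF Wq] by simp
      have "(1 + M) / 2 - c q \<le> M1 * dist q p"
        by (rule cross_lemma[OF cl q(1) p_open]) (use False cq M in auto)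
      also have "\<dots> \<le> M1 * (2 * h)" using q(2) M by (intro mult_left_mono) (auto simp: dist_commute)
      finally show False using cq hM' M False by (intro contra_aux2)
    qed
    have "1 = (\<integral>q. W K h p q \<partial>lborel)" using W1 by simp
    also have "\<dots> \<le> (\<integral>q. c1 c q * W K h p q \<partial>lborel)"
    proof (rule integral_mono[OF Wi Wci])
      fix q show "W K h p q \<le> c1 c q * W K h p q"
      proof (cases "W K h p q = 0")
        case False
        then show ?thesis using ge1[OF False] W0[of q] by (simp add: mult_right_mono[of 1, simplified])
      qed simp
    qed
    finally have "1 \<le> mK K h c p" using mK by simp
    moreover have "1 \<le> c p" using False M by simp
    ultimately show ?thesis using M h by simp
  qed
qed

lemma box_emeasure:
  assumes "a \<le> b" "c \<le> d"
  shows "emeasure lborel ({a..b} \<times> {c..d}) = ennreal ((b - a) * (d - c))"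
proof -
  have "emeasure (lborel \<Otimes>\<^sub>M lborel) ({a..b} \<times> {c..d}) = emeasure lborel {a..b} * emeasure lborel {c..d}"
    by (rule lborel.emeasure_pair_measure_Times) auto
  then show ?thesis using assms by (simp add: lborel_prod ennreal_mult)
qed

lemma sq_sets[measurable]: "unit_sq \<in> sets borel"
  unfolding unit_sq_def by (intro borel_closed closed_Times) auto

lemma inner_sets[measurable]: "inner_sq h \<in> sets borel"
  unfolding inner_sq_def by (intro borel_open open_Times) auto

lemma sq_emeasure: "emeasure lborel unit_sq = 1"
  unfolding unit_sq_def using box_emeasure[of 0 1 0 1] by simp

lemma sq_measure: "measure lborel unit_sq = 1"
  using sq_emeasure by (simp add: measure_def)

lemma frame_emeasure:
  assumes h: "0 < h" "h \<le> 1/4"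
  shows "emeasure lborel (unit_sq - inner_sq h) \<le> ennreal (4 * h)"
proof -
  define S1 where "S1 = {0..h} \<times> {0..1::real}"
  define S2 where "S2 = {1-h..1} \<times> {0..1::real}"
  define S3 where "S3 = {0..1::real} \<times> {0..h::real}"
  define S4 where "S4 = {0..1::real} \<times> {1-h..1::real}"
  have sub: "unit_sq - inner_sq h \<subseteq> S1 \<union> S2 \<union> S3 \<union> S4"
    unfolding unit_sq_def inner_sq_def S1_def S2_def S3_def S4_def by auto
  have [measurable]: "S1 \<in> sets borel" "S2 \<in> sets borel" "S3 \<in> sets borel" "S4 \<in> sets borel"
    unfolding S1_def S2_def S3_def S4_def by (intro borel_closed closed_Times; simp)+
  have e: "emeasure lborel S1 = ennreal h" "emeasure lborel S2 = ennreal h"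
          "emeasure lborel S3 = ennreal h" "emeasure lborel S4 = ennreal h"
    unfolding S1_def S2_def S3_def S4_def using h by (subst box_emeasure; simp)+
  have "emeasure lborel (unit_sq - inner_sq h) \<le> emeasure lborel (S1 \<union> S2 \<union> S3 \<union> S4)"
    by (rule emeasure_mono[OF sub]) simp
  also have "\<dots> \<le> emeasure lborel (S1 \<union> S2 \<union> S3) + emeasure lborel S4"
    by (rule emeasure_subadditive) auto
  also have "emeasure lborel (S1 \<union> S2 \<union> S3) \<le> emeasure lborel (S1 \<union> S2) + emeasure lborel S3"
    by (rule emeasure_subadditive) auto
  also have "emeasure lborel (S1 \<union> S2) \<le> emeasure lborel S1 + emeasure lborel S2"
    by (rule emeasure_subadditive) auto
  finally have "emeasure lborel (unit_sq - inner_sq h) \<le> ennreal h + ennreal h + ennreal h + ennreal h"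
    unfolding e by (simp add: add_right_mono)
  also have "\<dots> = ennreal (4 * h)" using h by (simp add: ennreal_plus[symmetric] del: ennreal_plus)
  finally show ?thesis .
qed

lemma Ccor_eq:
  assumes c: "is_copula_density c"
  shows "Ccor c = (\<integral>p. indicator unit_sq p * max 0 (1 - c1 c p) \<partial>lborel)"
proof -
  have ci: "integrable lborel (c1 c)" by (rule c1_int[OF c])
  have [measurable]: "c1 c \<in> borel_measurable borel" by (rule c1_meas[OF c])
  have ii: "integrable lborel (indicator unit_sq :: real\<times>real \<Rightarrow> real)"
    using sq_emeasure by (intro integrable_real_indicator) auto
  have e1: "\<And>p. indicator unit_sq p *\<^sub>R \<bar>c p - 1\<bar> = 2 * (indicator unit_sq p * max 0 (1 - c1 c p)) + (c1 c p - indicator unit_sq p)"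
    unfolding c1_def by (auto simp: indicator_def max_def)
  have i2: "integrable lborel (\<lambda>p. indicator unit_sq p * max 0 (1 - c1 c p))"
  proof (rule Bochner_Integration.integrable_bound[OF ii])
    show "(\<lambda>p. indicator unit_sq p * max 0 (1 - c1 c p)) \<in> borel_measurable lborel" by simp
    show "AE p in lborel. norm (indicator unit_sq p * max 0 (1 - c1 c p)) \<le> norm (indicator unit_sq p :: real)"
      using c1_nonneg_AE[OF c] by eventually_elim (auto simp: indicator_def)
  qed
  have "Ccor c = (1/2) * (\<integral>p. 2 * (indicator unit_sq p * max 0 (1 - c1 c p)) + (c1 c p - indicator unit_sq p) \<partial>lborel)"
    unfolding Ccor_def set_lebesgue_integral_def e1 ..
  also have "\<dots> = (1/2) * (2 * (\<integral>p. indicator unit_sq p * max 0 (1 - c1 c p) \<partial>lborel) + ((\<integral>p. c1 c p \<partial>lborel) - (\<integral>p. indicator unit_sq p \<partial>lborel)))"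
    using i2 ci ii by simp
  also have "\<dots> = (\<integral>p. indicator unit_sq p * max 0 (1 - c1 c p) \<partial>lborel)"
    using c1_total[OF c] sq_measure by simp
  finally show ?thesis .
qed

definition bias :: "(real \<Rightarrow> real) \<Rightarrow> real \<Rightarrow> (real \<times> real \<Rightarrow> real) \<Rightarrow> real \<times> real \<Rightarrow> real" where
  "bias K h c p = \<bar>max 0 (1 - mK K h c p) - max 0 (1 - c1 c p)\<bar>"

lemma bias_integral:
  assumes cl: "c \<in> copula_class M M1" and M: "M > 1" "M1 > 0"
    and K: "admissible_kernel K" and Kb: "\<And>x. K x \<le> Kb"
    and h: "0 < h" "h \<le> 1/4" "h \<le> (M - 1) / (16 * M1)"
  shows "(\<integral>\<^sup>+p. ennreal (indicator unit_sq p * bias K h c p) \<partial>lborel) \<le> ennreal ((4 + 2 * M1) * h)"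
proof -
  have c: "is_copula_density c" using cl unfolding copula_class_def by auto
  have cnn: "\<And>p. p \<in> open_unit_sq \<Longrightarrow> 0 \<le> c p" using c unfolding is_copula_density_def by auto
  have "AE p in lborel. ennreal (indicator unit_sq p * bias K h c p)
          \<le> indicator (unit_sq - inner_sq h) p + ennreal (2 * M1 * h) * indicator unit_sq p"
    using AE_open_sq
  proof eventually_elim
    case (elim p)
    show ?case
    proof (cases "p \<in> unit_sq")
      case False then show ?thesis by simp
    next
      case True
      then have po: "p \<in> open_unit_sq" using elim by blast
      have c1p: "c1 c p = c p" using True unfolding c1_def by simp
      show ?thesis
      proof (cases "p \<in> inner_sq h")
        case True
        have "bias K h c p \<le> 2 * M1 * h" unfolding bias_def c1p
          by (rule bias_inner[OF cl M K Kb h True])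
        then show ?thesis using \<open>p \<in> unit_sq\<close> True by (simp add: ennreal_leI)
      next
        case False
        have "0 \<le> mK K h c p" by (rule mK_nonneg[OF K])
        moreover have "0 \<le> c p" by (rule cnn[OF po])
        ultimately have "bias K h c p \<le> 1" unfolding bias_def c1p by (auto simp: max_def)
        then have "ennreal (indicator unit_sq p * bias K h c p) \<le> 1"
          using \<open>p \<in> unit_sq\<close> by (simp add: ennreal_leI)
        also have "(1::ennreal) \<le> indicator (unit_sq - inner_sq h) p + ennreal (2 * M1 * h) * indicator unit_sq p"
          using \<open>p \<in> unit_sq\<close> False by simp
        finally show ?thesis .
      qed
    qed
  qed
  then have "(\<integral>\<^sup>+p. ennreal (indicator unit_sq p * bias K h c p) \<partial>lborel)
      \<le> (\<integral>\<^sup>+p. indicator (unit_sq - inner_sq h) p + ennreal (2 * M1 * h) * indicator unit_sq p \<partial>lborel)"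
    by (rule nn_integral_mono_AE)
  also have "\<dots> = emeasure lborel (unit_sq - inner_sq h) + ennreal (2 * M1 * h) * emeasure lborel unit_sq"
    by (subst nn_integral_add) (auto simp: nn_integral_cmult)
  also have "\<dots> \<le> ennreal (4 * h) + ennreal (2 * M1 * h)"
    using frame_emeasure[OF h(1,2)] sq_emeasure by (simp add: add_right_mono)
  also have "\<dots> = ennreal ((4 + 2 * M1) * h)"
    using h M by (simp add: ennreal_plus[symmetric] algebra_simps del: ennreal_plus)
  finally show ?thesis .
qed

lemma W_joint_meas:
  assumes K: "admissible_kernel K"
  shows "(\<lambda>x. W K h (fst x) (snd x)) \<in> borel_measurable (lborel \<Otimes>\<^sub>M lborel :: ((real\<times>real)\<times>(real\<times>real)) measure)"
proof -
  have [measurable]: "K \<in> borel_measurable borel" using K by (rule adm_meas)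
  have e: "sets (lborel \<Otimes>\<^sub>M lborel :: ((real\<times>real)\<times>(real\<times>real)) measure) = sets ((borel \<Otimes>\<^sub>M borel) \<Otimes>\<^sub>M (borel \<Otimes>\<^sub>M borel))"
    by (intro sets_pair_measure_cong) (simp_all only: sets_lborel borel_prod)
  have "(\<lambda>x. W K h (fst x) (snd x)) \<in> borel_measurable ((borel \<Otimes>\<^sub>M borel) \<Otimes>\<^sub>M (borel \<Otimes>\<^sub>M borel) :: ((real\<times>real)\<times>(real\<times>real)) measure)"
    unfolding W_def by measurable
  then show ?thesis by (subst measurable_cong_sets[OF e refl])
qed

lemma W_meas_borel_p:
  assumes "admissible_kernel K"
  shows "(\<lambda>p. W K h p q) \<in> borel_measurable borel"
proof -
  have [measurable]: "K \<in> borel_measurable borel" using assms by (rule adm_meas)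
  show ?thesis unfolding W_def borel_prod[symmetric] by measurable
qed

lemma mK_meas:
  assumes K: "admissible_kernel K" and c: "is_copula_density c"
  shows "mK K h c \<in> borel_measurable borel"
proof -
  have [measurable]: "c1 c \<in> borel_measurable borel" by (rule c1_meas[OF c])
  have j[measurable]: "(\<lambda>x. W K h (fst x) (snd x)) \<in> borel_measurable (lborel \<Otimes>\<^sub>M lborel :: ((real\<times>real)\<times>(real\<times>real)) measure)"
    by (rule W_joint_meas[OF K])
  have "(\<lambda>p. \<integral>q. c1 c q * W K h p q \<partial>lborel) \<in> borel_measurable lborel"
    by (rule lborel.borel_measurable_lebesgue_integral) (simp add: split_beta')
  then show ?thesis unfolding mK_eq[OF K c, abs_def] by simp
qed

lemma mK_total:
  assumes K: "admissible_kernel K" and c: "is_copula_density c" and h: "h > 0" and Kb: "\<And>x. K x \<le> Kb"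
  shows "(\<integral>\<^sup>+p. ennreal (mK K h c p) \<partial>lborel) = 1"
proof -
  have [measurable]: "c1 c \<in> borel_measurable borel" by (rule c1_meas[OF c])
  have j[measurable]: "(\<lambda>x. W K h (fst x) (snd x)) \<in> borel_measurable (lborel \<Otimes>\<^sub>M lborel :: ((real\<times>real)\<times>(real\<times>real)) measure)"
    by (rule W_joint_meas[OF K])
  have e1: "\<And>p. ennreal (mK K h c p) = (\<integral>\<^sup>+q. ennreal (c1 c q * W K h p q) \<partial>lborel)"
  proof -
    fix p
    show "ennreal (mK K h c p) = (\<integral>\<^sup>+q. ennreal (c1 c q * W K h p q) \<partial>lborel)"
      unfolding mK_eq[OF K c]
      by (rule nn_integral_eq_integral[symmetric, OF Wc1_integrable[OF K h Kb c]])
         (use c1_nonneg_AE[OF c] in \<open>eventually_elim, simp add: W_nonneg[OF K]\<close>)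
  qed
  have PSF: "pair_sigma_finite (lborel :: (real\<times>real) measure) (lborel :: (real\<times>real) measure)"
    by (rule pair_sigma_finite.intro; rule lborel.sigma_finite_measure_axioms)
  have "(\<integral>\<^sup>+p. ennreal (mK K h c p) \<partial>lborel) = (\<integral>\<^sup>+p. (\<integral>\<^sup>+q. ennreal (c1 c q * W K h p q) \<partial>lborel) \<partial>lborel)"
    unfolding e1 ..
  also have "\<dots> = (\<integral>\<^sup>+q. (\<integral>\<^sup>+p. ennreal (c1 c q * W K h p q) \<partial>lborel) \<partial>lborel)"
    by (rule pair_sigma_finite.Fubini'[OF PSF, symmetric]) (simp add: split_beta')
  also have "\<dots> = (\<integral>\<^sup>+q. ennreal (c1 c q) * (\<integral>\<^sup>+p. ennreal (W K h p q) \<partial>lborel) \<partial>lborel)"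
  proof (rule nn_integral_cong)
    fix q
    have "(\<integral>\<^sup>+p. ennreal (c1 c q * W K h p q) \<partial>lborel) = (\<integral>\<^sup>+p. ennreal (c1 c q) * ennreal (W K h p q) \<partial>lborel)"
      by (intro nn_integral_cong ennreal_mult'' W_nonneg[OF K])
    also have "\<dots> = ennreal (c1 c q) * (\<integral>\<^sup>+p. ennreal (W K h p q) \<partial>lborel)"
    proof (rule nn_integral_cmult)
      have [measurable]: "(\<lambda>p. W K h p q) \<in> borel_measurable borel" by (rule W_meas_borel_p[OF K])
      show "(\<lambda>p. ennreal (W K h p q)) \<in> borel_measurable lborel" by simp
    qed
    finally show "(\<integral>\<^sup>+p. ennreal (c1 c q * W K h p q) \<partial>lborel) = ennreal (c1 c q) * (\<integral>\<^sup>+p. ennreal (W K h p q) \<partial>lborel)" .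
  qed
  also have "\<dots> = (\<integral>\<^sup>+q. ennreal (c1 c q) \<partial>lborel)" by (simp add: W_int_p[OF K h])
  also have "\<dots> = ennreal (\<integral>q. c1 c q \<partial>lborel)"
    by (rule nn_integral_eq_integral[OF c1_int[OF c] c1_nonneg_AE[OF c]])
  also have "\<dots> = 1" using c1_total[OF c] by simp
  finally show ?thesis .
qed

lemma kde_joint_meas:
  assumes K: "admissible_kernel K"
  shows "(\<lambda>x. kde K n h (fst x) (snd x)) \<in> borel_measurable (sample_law c n \<Otimes>\<^sub>M (lborel :: (real\<times>real) measure))"
proof -
  have [measurable]: "K \<in> borel_measurable borel" using K by (rule adm_meas)
  have e: "sets (sample_law c n \<Otimes>\<^sub>M (lborel :: (real\<times>real) measure)) = sets (PiM {..<n} (\<lambda>_. borel \<Otimes>\<^sub>M borel) \<Otimes>\<^sub>M (borel \<Otimes>\<^sub>M borel))"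
    unfolding sample_law_def
    by (intro sets_pair_measure_cong sets_PiM_cong) (simp_all only: sets_lborel borel_prod sets_copula)
  have "(\<lambda>x. kde K n h (fst x) (snd x)) \<in> borel_measurable (PiM {..<n} (\<lambda>_. borel \<Otimes>\<^sub>M borel) \<Otimes>\<^sub>M (borel \<Otimes>\<^sub>M borel) :: ((nat \<Rightarrow> real\<times>real) \<times> (real\<times>real)) measure)"
    unfolding kde_def by measurable
  then show ?thesis by (subst measurable_cong_sets[OF e refl])
qed

lemma kde_meas_p:
  assumes K: "admissible_kernel K"
  shows "kde K n h \<omega> \<in> borel_measurable borel"
proof -
  have [measurable]: "K \<in> borel_measurable borel" using K by (rule adm_meas)
  show ?thesis unfolding kde_def[abs_def] borel_prod[symmetric] by measurable
qed

lemma kde_nonneg: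
  assumes "admissible_kernel K" shows "0 \<le> kde K n h \<omega> p"
proof -
  have nn: "\<And>x. 0 \<le> K x" using assms unfolding admissible_kernel_def by blast
  have "0 \<le> (\<Sum>i<n. K ((fst p - fst (\<omega> i)) / h) * K ((snd p - snd (\<omega> i)) / h))"
    using nn by (intro sum_nonneg mult_nonneg_nonneg) auto
  then show ?thesis unfolding kde_def by simp
qed

lemma omega_bound:
  assumes K: "admissible_kernel K" and c: "is_copula_density c"
  shows "ennreal \<bar>Ccor_hat K n h \<omega> - Ccor c\<bar>
     \<le> (\<integral>\<^sup>+p. indicator unit_sq p * ennreal \<bar>kde K n h \<omega> p - mK K h c p\<bar> \<partial>lborel)
        + (\<integral>\<^sup>+p. ennreal (indicator unit_sq p * bias K h c p) \<partial>lborel)"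
proof -
  have [measurable]: "c1 c \<in> borel_measurable borel" by (rule c1_meas[OF c])
  have [measurable]: "kde K n h \<omega> \<in> borel_measurable borel" by (rule kde_meas_p[OF K])
  have [measurable]: "mK K h c \<in> borel_measurable borel" by (rule mK_meas[OF K c])
  define L where "L p = indicator unit_sq p * max 0 (1 - kde K n h \<omega> p)" for p
  define R where "R p = indicator unit_sq p * max 0 (1 - c1 c p)" for p
  have ii: "integrable lborel (indicator unit_sq :: real\<times>real \<Rightarrow> real)"
    using sq_emeasure by (intro integrable_real_indicator) auto
  have Li: "integrable lborel L"
  proof (rule Bochner_Integration.integrable_bound[OF ii])
    show "L \<in> borel_measurable lborel" unfolding L_def by simp
    show "AE p in lborel. norm (L p) \<le> norm (indicator unit_sq p :: real)"
      using kde_nonneg[OF K] by (auto simp: L_def indicator_def)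
  qed
  have Ri: "integrable lborel R"
  proof (rule Bochner_Integration.integrable_bound[OF ii])
    show "R \<in> borel_measurable lborel" unfolding R_def by simp
    show "AE p in lborel. norm (R p) \<le> norm (indicator unit_sq p :: real)"
      using c1_nonneg_AE[OF c] by eventually_elim (auto simp: R_def indicator_def)
  qed
  have "Ccor_hat K n h \<omega> - Ccor c = (\<integral>p. L p \<partial>lborel) - (\<integral>p. R p \<partial>lborel)"
    unfolding Ccor_hat_def Ccor_eq[OF c] set_lebesgue_integral_def L_def R_def by simp
  also have "\<dots> = (\<integral>p. L p - R p \<partial>lborel)" using Li Ri by simp
  finally have eq: "Ccor_hat K n h \<omega> - Ccor c = (\<integral>p. L p - R p \<partial>lborel)" .
  have "ennreal \<bar>Ccor_hat K n h \<omega> - Ccor c\<bar> \<le> (\<integral>\<^sup>+p. ennreal (norm (L p - R p)) \<partial>lborel)"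
    unfolding eq using integral_norm_bound_ennreal[of lborel "\<lambda>p. L p - R p"] Li Ri by simp
  also have "\<dots> \<le> (\<integral>\<^sup>+p. indicator unit_sq p * ennreal \<bar>kde K n h \<omega> p - mK K h c p\<bar>
                      + ennreal (indicator unit_sq p * bias K h c p) \<partial>lborel)"
  proof (rule nn_integral_mono)
    fix p
    show "ennreal (norm (L p - R p)) \<le> indicator unit_sq p * ennreal \<bar>kde K n h \<omega> p - mK K h c p\<bar>
                      + ennreal (indicator unit_sq p * bias K h c p)"
    proof (cases "p \<in> unit_sq")
      case True
      have "\<bar>max 0 (1 - kde K n h \<omega> p) - max 0 (1 - c1 c p)\<bar>
            \<le> \<bar>max 0 (1 - kde K n h \<omega> p) - max 0 (1 - mK K h c p)\<bar> + bias K h c p"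
        unfolding bias_def by linarith
      also have "\<dots> \<le> \<bar>kde K n h \<omega> p - mK K h c p\<bar> + bias K h c p"
        using max_lip[of "kde K n h \<omega> p" "mK K h c p"] by linarith
      finally have "norm (L p - R p) \<le> \<bar>kde K n h \<omega> p - mK K h c p\<bar> + bias K h c p"
        using True by (simp add: L_def R_def)
      then have "ennreal (norm (L p - R p)) \<le> ennreal (\<bar>kde K n h \<omega> p - mK K h c p\<bar> + bias K h c p)"
        by (rule ennreal_leI)
      also have "\<dots> = ennreal \<bar>kde K n h \<omega> p - mK K h c p\<bar> + ennreal (bias K h c p)"
        by (rule ennreal_plus) (auto simp: bias_def)
      finally show ?thesis using True by simp
    next
      case False
      then show ?thesis by (simp add: L_def R_def)
    qed
  qed
  also have "\<dots> = (\<integral>\<^sup>+p. indicator unit_sq p * ennreal \<bar>kde K n h \<omega> p - mK K h c p\<bar> \<partial>lborel)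
        + (\<integral>\<^sup>+p. ennreal (indicator unit_sq p * bias K h c p) \<partial>lborel)"
    by (rule nn_integral_add) (auto simp: bias_def)
  finally show ?thesis .
qed

lemma risk_bound:
  assumes cl: "c \<in> copula_class M M1" and M: "M > 1" "M1 > 0"
    and K: "admissible_kernel K" and Kb: "Kb > 0" "\<And>x. K x \<le> Kb"
    and n: "n \<ge> 1" and h: "0 < h" "h \<le> 1/4" "h \<le> (M - 1) / (16 * M1)"
  shows "risk K c n h \<le> ennreal ((4 + 2 * M1) * h + (3/2 * Kb) / sqrt (real n * h\<^sup>2))"
proof -
  have c: "is_copula_density c" using cl unfolding copula_class_def by auto
  define P where "P = sample_law c n"
  interpret PP: prob_space P unfolding P_def sample_law_def by (rule prob_space_PiM) (rule prob_copula[OF c])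
  have PSF: "pair_sigma_finite P (lborel :: (real\<times>real) measure)"
    by (rule pair_sigma_finite.intro; rule PP.sigma_finite_measure_axioms lborel.sigma_finite_measure_axioms)
  have [measurable]: "mK K h c \<in> borel_measurable borel" by (rule mK_meas[OF K c])
  have kj[measurable]: "(\<lambda>x. kde K n h (fst x) (snd x)) \<in> borel_measurable (P \<Otimes>\<^sub>M (lborel :: (real\<times>real) measure))"
    unfolding P_def by (rule kde_joint_meas[OF K])
  define F where "F \<omega> p = indicator unit_sq p * ennreal \<bar>kde K n h \<omega> p - mK K h c p\<bar>" for \<omega> p
  have Fm[measurable]: "(\<lambda>x. F (fst x) (snd x)) \<in> borel_measurable (P \<Otimes>\<^sub>M (lborel :: (real\<times>real) measure))"
    unfolding F_def by measurable
  define Bc where "Bc = (\<integral>\<^sup>+p. ennreal (indicator unit_sq p * bias K h c p) \<partial>lborel)"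
  have Am: "(\<lambda>\<omega>. \<integral>\<^sup>+p. F \<omega> p \<partial>lborel) \<in> borel_measurable P"
    using lborel.borel_measurable_nn_integral_fst[OF Fm] by simp
  have "risk K c n h \<le> (\<integral>\<^sup>+\<omega>. (\<integral>\<^sup>+p. F \<omega> p \<partial>lborel) + Bc \<partial>P)"
    unfolding risk_def P_def[symmetric] F_def Bc_def
    by (rule nn_integral_mono) (rule omega_bound[OF K c])
  also have "\<dots> = (\<integral>\<^sup>+\<omega>. (\<integral>\<^sup>+p. F \<omega> p \<partial>lborel) \<partial>P) + Bc"
    using Am by (subst nn_integral_add) (auto simp: PP.emeasure_space_1)
  also have "(\<integral>\<^sup>+\<omega>. (\<integral>\<^sup>+p. F \<omega> p \<partial>lborel) \<partial>P) = (\<integral>\<^sup>+p. (\<integral>\<^sup>+\<omega>. F \<omega> p \<partial>P) \<partial>lborel)"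
    by (rule pair_sigma_finite.Fubini'[OF PSF, symmetric]) (simp add: split_beta')
  also have "\<dots> \<le> (\<integral>\<^sup>+p. ennreal (Kb / sqrt (real n * h\<^sup>2) / 2) * (indicator unit_sq p * ennreal (mK K h c p) + 2 * indicator unit_sq p) \<partial>lborel)"
  proof (rule nn_integral_mono)
    fix p :: "real \<times> real"
    show "(\<integral>\<^sup>+\<omega>. F \<omega> p \<partial>P) \<le> ennreal (Kb / sqrt (real n * h\<^sup>2) / 2) * (indicator unit_sq p * ennreal (mK K h c p) + 2 * indicator unit_sq p)"
    proof (cases "p \<in> unit_sq")
      case True
      have "(\<integral>\<^sup>+\<omega>. F \<omega> p \<partial>P) = (\<integral>\<^sup>+\<omega>. ennreal \<bar>kde K n h \<omega> p - mK K h c p\<bar> \<partial>P)"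
        using True unfolding F_def by simp
      also have "\<dots> \<le> ennreal (Kb / sqrt (real n * h\<^sup>2) * ((mK K h c p + 2) / 2))"
        unfolding P_def by (rule pointwise_var[OF K Kb c n h(1)])
      also have "\<dots> = ennreal (Kb / sqrt (real n * h\<^sup>2) / 2) * (ennreal (mK K h c p) + 2)"
      proof -
        define a where "a = Kb / sqrt (real n * h\<^sup>2) / 2"
        define m where "m = mK K h c p"
        have a0: "0 \<le> a" unfolding a_def using Kb by simp
        have m0: "0 \<le> m" unfolding m_def by (rule mK_nonneg[OF K])
        have "Kb / sqrt (real n * h\<^sup>2) * ((m + 2) / 2) = a * (m + 2)" unfolding a_def by simp
        then have "ennreal (Kb / sqrt (real n * h\<^sup>2) * ((m + 2) / 2)) = ennreal a * ennreal (m + 2)"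
          using a0 m0 by (simp add: ennreal_mult)
        also have "ennreal (m + 2) = ennreal m + 2" using m0 by (simp add: ennreal_plus)
        finally show ?thesis unfolding a_def m_def .
      qed
      finally show ?thesis using True by simp
    next
      case False
      then show ?thesis unfolding F_def by simp
    qed
  qed
  also have "\<dots> = ennreal (Kb / sqrt (real n * h\<^sup>2) / 2) * ((\<integral>\<^sup>+p. indicator unit_sq p * ennreal (mK K h c p) \<partial>lborel) + 2 * emeasure lborel unit_sq)"
    by (subst nn_integral_cmult; simp) (subst nn_integral_add; simp add: nn_integral_cmult)
  also have "\<dots> \<le> ennreal (Kb / sqrt (real n * h\<^sup>2) / 2) * (1 + 2)"
  proof -
    have "(\<integral>\<^sup>+p. indicator unit_sq p * ennreal (mK K h c p) \<partial>lborel) \<le> (\<integral>\<^sup>+p. ennreal (mK K h c p) \<partial>lborel)"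
      by (rule nn_integral_mono) (simp add: indicator_def)
    also have "\<dots> = 1" by (rule mK_total[OF K c h(1) Kb(2)])
    finally have X: "(\<integral>\<^sup>+p. indicator unit_sq p * ennreal (mK K h c p) \<partial>lborel) \<le> 1" .
    have "(\<integral>\<^sup>+p. indicator unit_sq p * ennreal (mK K h c p) \<partial>lborel) + 2 * emeasure lborel unit_sq \<le> 1 + 2"
      unfolding sq_emeasure using add_right_mono[OF X, of 2] by simp
    then show ?thesis by (intro mult_left_mono) auto
  qed
  also have "\<dots> = ennreal ((3/2 * Kb) / sqrt (real n * h\<^sup>2))"
  proof -
    define a where "a = Kb / sqrt (real n * h\<^sup>2) / 2"
    have e3: "ennreal (a * 3) = ennreal a * 3" using ennreal_mult''[of 3 a] by simp
    have "ennreal a * (1 + 2) = ennreal (a * 3)" unfolding e3 by simp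
    also have "a * 3 = (3/2 * Kb) / sqrt (real n * h\<^sup>2)" unfolding a_def by simp
    finally show ?thesis unfolding a_def .
  qed
  finally have "risk K c n h \<le> ennreal ((3/2 * Kb) / sqrt (real n * h\<^sup>2)) + Bc" by (simp add: add_right_mono)
  also have "Bc \<le> ennreal ((4 + 2 * M1) * h)" unfolding Bc_def by (rule bias_integral[OF cl M K Kb(2) h])
  finally show ?thesis using Kb h M n
    by (simp add: ennreal_plus[symmetric] add.commute del: ennreal_plus)
qed

lemma powr_facts:
  fixes x :: real assumes x1: "x \<ge> 1"
  defines "h \<equiv> x powr (-1/4)"
  shows "0 < h" "B / sqrt (x * h\<^sup>2) = B * h" "1 / (x * h\<^sup>2) \<le> h"
proof -
  show "0 < h" unfolding h_def using x1 by simp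
  have m14: "-1/4 = -(1/4::real)" by simp
  have hinv: "h = inverse (x powr (1/4))" unfolding h_def m14 by (rule powr_minus)
  have hsq: "h\<^sup>2 = x powr (-1/2)"
  proof -
    have "h\<^sup>2 = x powr (-1/4) * x powr (-1/4)" unfolding h_def by (simp add: power2_eq_square)
    also have "\<dots> = x powr (-1/4 + -1/4)" by (rule powr_add[symmetric])
    finally show ?thesis by simp
  qed
  have nh: "x * h\<^sup>2 = x powr (1/2)"
  proof -
    have "x * h\<^sup>2 = x powr 1 * x powr (-1/2)" unfolding hsq using x1 by simp
    also have "\<dots> = x powr (1 + -1/2)" by (rule powr_add[symmetric])
    finally show ?thesis by simp
  qed
  have e: "(1/2::real) * (1/2) = 1/4" by simp
  have "sqrt (x powr (1/2)) = (x powr (1/2)) powr (1/2)" by (rule powr_half_sqrt[symmetric]) simp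
  also have "\<dots> = x powr (1/2 * (1/2))" by (rule powr_powr)
  also have "\<dots> = x powr (1/4)" by (simp only: e)
  finally have s0: "sqrt (x powr (1/2)) = x powr (1/4)" .
  have s: "sqrt (x * h\<^sup>2) = x powr (1/4)" by (simp only: nh s0)
  have "B / sqrt (x * h\<^sup>2) = B / x powr (1/4)" by (simp only: s)
  also have "\<dots> = B * inverse (x powr (1/4))" by (rule divide_inverse)
  also have "\<dots> = B * h" by (simp only: hinv)
  finally show "B / sqrt (x * h\<^sup>2) = B * h" .
  have m12: "-1/2 = -(1/2::real)" by simp
  have "1 / (x * h\<^sup>2) = x powr (-1/2)" unfolding nh m12 powr_minus by (rule inverse_eq_divide[symmetric])
  also have "\<dots> \<le> x powr (-1/4)" using x1 by (intro powr_mono) auto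
  finally show "1 / (x * h\<^sup>2) \<le> h" unfolding h_def .
qed
lemma part1:
  assumes M: "M > 1" "M1 > 0" and K: "admissible_kernel K" and Kb: "Kb > 0" "\<And>x. K x \<le> Kb"
    and n: "n \<ge> 1" and h: "0 < h" "h \<le> min (1/4) ((M - 1) / (16 * M1))"
  shows "(SUP c\<in>copula_class M M1. risk K c n h)
           \<le> ennreal ((4 + 2 * M1) * h + (3/2 * Kb) / sqrt (real n * h\<^sup>2) + 1 / (real n * h\<^sup>2))"
proof (rule SUP_least)
  fix c assume cl: "c \<in> copula_class M M1"
  have "risk K c n h \<le> ennreal ((4 + 2 * M1) * h + (3/2 * Kb) / sqrt (real n * h\<^sup>2))"
    using h by (intro risk_bound[OF cl M K Kb n]) auto
  also have "\<dots> \<le> ennreal ((4 + 2 * M1) * h + (3/2 * Kb) / sqrt (real n * h\<^sup>2) + 1 / (real n * h\<^sup>2))"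
    using n h by (intro ennreal_leI) simp
  finally show "risk K c n h \<le> ennreal ((4 + 2 * M1) * h + (3/2 * Kb) / sqrt (real n * h\<^sup>2) + 1 / (real n * h\<^sup>2))" .
qed

theorem theorem2:
  fixes M M1 :: real and K :: "real \<Rightarrow> real"
  assumes "M > 1" and "M1 > 0" and "admissible_kernel K"
  shows "(\<exists>A B M5 h0. A > 0 \<and> B > 0 \<and> M5 > 0 \<and> h0 > 0 \<and>
            (\<forall>n::nat. n \<ge> 1 \<longrightarrow> (\<forall>h. 0 < h \<and> h \<le> h0 \<longrightarrow>
               (SUP c\<in>copula_class M M1. risk K c n h)
                 \<le> ennreal (A * h + B / sqrt (real n * h\<^sup>2) + M5 / (real n * h\<^sup>2)))))
       \<and> (\<forall>hs :: nat \<Rightarrow> real. (\<forall>n. hs n > 0) \<longrightarrow> hs \<longlonglongrightarrow> 0 \<longrightarrow>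
            filterlim (\<lambda>n. real n * (hs n)\<^sup>2) at_top sequentially \<longrightarrow>
            (\<lambda>n. SUP c\<in>copula_class M M1. risk K c n (hs n)) \<longlonglongrightarrow> 0)
       \<and> (\<exists>D. \<forall>\<^sub>F n in sequentially.
            (SUP c\<in>copula_class M M1. risk K c n (real n powr (-1/4)))
              \<le> ennreal (D * real n powr (-1/4)))"
proof -
  note M = assms(1,2) and K = assms(3)
  obtain Kb where Kb: "Kb > 0" "\<And>x. K x \<le> Kb" using adm_bound[OF K] by blast
  define h0 where "h0 = min (1/4) ((M - 1) / (16 * M1))"
  define A where "A = 4 + 2 * M1"
  define B where "B = 3/2 * Kb"
  have h00: "h0 > 0" unfolding h0_def using M by simp
  have A0: "A > 0" unfolding A_def using M by simp
  have B0: "B > 0" unfolding B_def using Kb by simp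
  have P1: "\<And>n h. n \<ge> 1 \<Longrightarrow> 0 < h \<Longrightarrow> h \<le> h0 \<Longrightarrow>
      (SUP c\<in>copula_class M M1. risk K c n h) \<le> ennreal (A * h + B / sqrt (real n * h\<^sup>2) + 1 / (real n * h\<^sup>2))"
    unfolding A_def B_def h0_def by (rule part1[OF M K Kb]) auto
  show ?thesis
  proof (intro conjI allI impI)
    show "\<exists>A B M5 h0. A > 0 \<and> B > 0 \<and> M5 > 0 \<and> h0 > 0 \<and>
            (\<forall>n::nat. n \<ge> 1 \<longrightarrow> (\<forall>h. 0 < h \<and> h \<le> h0 \<longrightarrow>
               (SUP c\<in>copula_class M M1. risk K c n h)
                 \<le> ennreal (A * h + B / sqrt (real n * h\<^sup>2) + M5 / (real n * h\<^sup>2))))"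
      using A0 B0 h00 P1 by (intro exI[of _ A] exI[of _ B] exI[of _ 1] exI[of _ h0]) auto
  next
    fix hs :: "nat \<Rightarrow> real"
    assume hs0: "\<forall>n. hs n > 0" and hsl: "hs \<longlonglongrightarrow> 0"
      and hst: "filterlim (\<lambda>n. real n * (hs n)\<^sup>2) at_top sequentially"
    define g where "g n = A * hs n + B / sqrt (real n * (hs n)\<^sup>2) + 1 / (real n * (hs n)\<^sup>2)" for n
    have gl: "g \<longlonglongrightarrow> 0"
    proof -
      have "(\<lambda>n. A * hs n) \<longlonglongrightarrow> A * 0" by (intro tendsto_mult tendsto_const hsl)
      moreover have "(\<lambda>n. B / sqrt (real n * (hs n)\<^sup>2)) \<longlonglongrightarrow> 0"
        by (rule tendsto_divide_0[OF tendsto_const]) (rule filterlim_at_top_imp_at_infinity, rule filterlim_compose[OF sqrt_at_top hst])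
      moreover have "(\<lambda>n. 1 / (real n * (hs n)\<^sup>2)) \<longlonglongrightarrow> 0"
        by (rule tendsto_divide_0[OF tendsto_const]) (rule filterlim_at_top_imp_at_infinity[OF hst])
      ultimately have "g \<longlonglongrightarrow> A * 0 + 0 + 0" unfolding g_def[abs_def] by (intro tendsto_add)
      then show ?thesis by simp
    qed
    have ev: "\<forall>\<^sub>F n in sequentially. (SUP c\<in>copula_class M M1. risk K c n (hs n)) \<le> ennreal (g n)"
    proof -
      have "\<forall>\<^sub>F n in sequentially. hs n < h0" using order_tendstoD(2)[OF hsl h00] .
      moreover have "\<forall>\<^sub>F n in sequentially. n \<ge> 1" by (rule eventually_ge_at_top)
      ultimately show ?thesis
      proof eventually_elim
        case (elim n) then show ?case unfolding g_def using P1[of n "hs n"] hs0 by auto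
      qed
    qed
    show "(\<lambda>n. SUP c\<in>copula_class M M1. risk K c n (hs n)) \<longlonglongrightarrow> 0"
    proof (rule tendsto_sandwich[OF _ ev tendsto_const])
      show "\<forall>\<^sub>F n in sequentially. 0 \<le> (SUP c\<in>copula_class M M1. risk K c n (hs n))" by simp
      have "(\<lambda>n. ennreal (g n)) \<longlonglongrightarrow> ennreal 0" by (intro tendsto_ennrealI gl)
      then show "(\<lambda>n. ennreal (g n)) \<longlonglongrightarrow> 0" by simp
    qed
  next
    have tl: "(\<lambda>n. real n powr (-1/4)) \<longlonglongrightarrow> 0"
      by (rule tendsto_neg_powr) (auto intro: filterlim_real_sequentially)
    have "\<forall>\<^sub>F n in sequentially. real n powr (-1/4) < h0" using order_tendstoD(2)[OF tl h00] .
    moreover have "\<forall>\<^sub>F n in sequentially. n \<ge> 1" by (rule eventually_ge_at_top)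
    ultimately have "\<forall>\<^sub>F n in sequentially.
            (SUP c\<in>copula_class M M1. risk K c n (real n powr (-1/4)))
              \<le> ennreal ((A + B + 1) * real n powr (-1/4))"
    proof eventually_elim
      case (elim n)
      have x1: "real n \<ge> 1" using elim by simp
      define h where "h = real n powr (-1/4)"
      have h0': "0 < h" and t2: "B / sqrt (real n * h\<^sup>2) = B * h" and t3: "1 / (real n * h\<^sup>2) \<le> h"
        unfolding h_def by (rule powr_facts[OF x1])+
      have hlt: "h \<le> h0" unfolding h_def using elim by simp
      have "(SUP c\<in>copula_class M M1. risk K c n h) \<le> ennreal (A * h + B / sqrt (real n * h\<^sup>2) + 1 / (real n * h\<^sup>2))"
        by (rule P1[OF _ h0' hlt]) (use elim in simp)
      also have "\<dots> \<le> ennreal ((A + B + 1) * h)"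
      proof (rule ennreal_leI)
        show "A * h + B / sqrt (real n * h\<^sup>2) + 1 / (real n * h\<^sup>2) \<le> (A + B + 1) * h"
          unfolding t2 using t3 by (simp add: distrib_right)
      qed
      finally show ?case unfolding h_def .
    qed
    then show "\<exists>D. \<forall>\<^sub>F n in sequentially.
            (SUP c\<in>copula_class M M1. risk K c n (real n powr (-1/4)))
              \<le> ennreal (D * real n powr (-1/4))" by blast
  qed
qed


end
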